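(* Let $d\le\ell$ be positive integers and $L\ge2$. In an $L$-graph $\mathcal G$ with a $(p,n,d)$-non-backtracking multi-labelling $\mathcal L$, the number of $T_4$ edges is at most $12\,\bar\Delta(\mathcal L)\,\ell$.
   Context: An $L$-graph is a cycle with $2L$ vertices alternating between $n$-vertices and $p$-vertices. A $(p,n,d)$-non-backtracking multi-labelling assigns an $n$-label in $[n]$ to each $n$-vertex and a tuple of $d$ distinct $p$-labels in $[p]$ to each $p$-vertex ($d\le\ell$) such that (i) each $n$-vertex's label differs from those of the $n$-vertices immediately preceding and following it, and each $p$-vertex's tuple differs (up to reordering) from those of the $p$-vertices immediately preceding and following it; (ii) for each $n$-label $i$ and $p$-label $j$ the number of edges with $n$-endpoint labelled $i$ and $p$-endpoint's tuple containing $j$ is even. With $\tilde r,\tilde c$ the numbers of distinct $n$- and $p$-labels, $\bar\Delta(\mathcal L)=1+\frac L2+\frac{dL}{2\ell}-\tilde r-\frac{\tilde c}{\ell}$. Fix a starting $p$-vertex and orientation. For an edge between an $n$-vertex labelled $i$ and a $p$-vertex with tuple $(j_1,\dots,j_d)$, its sub-edges are the pairs $(i,j_k)$ in traversal order; a sub-edge is $t_1$ if the label at its later endpoint has not previously appeared on a vertex of that kind, $t_3$ if the same label pair has occurred exactly once before as a sub-edge and that occurrence was $t_1$, and $t_4$ otherwise. An edge is $T_1$ if all its sub-edges are $t_1$, $T_3$ if all are $t_3$, and $T_4$ otherwise. *)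

theory Defs
  imports Complex_Main
begin

(* An L-graph is traversed starting at p-vertex 0 with a fixed orientation:
   p_0, n_0, p_1, n_1, ..., p_{L-1}, n_{L-1}, (back to p_0).
   A labelling is given by nl k (label of n-vertex n_k, k < L) and
   pl k (tuple of p-labels of p-vertex p_k, k < L).
   Edges are indexed m < 2L: edge 2k joins p_k -> n_k, edge 2k+1 joins n_k -> p_{k+1 mod L}. *)

definition edge_nlab :: "(nat \<Rightarrow> nat) \<Rightarrow> nat \<Rightarrow> nat" where
  "edge_nlab nl m = nl (m div 2)"

definition edge_ptup :: "nat \<Rightarrow> (nat \<Rightarrow> nat list) \<Rightarrow> nat \<Rightarrow> nat list" where
  "edge_ptup L pl m = pl (if even m then m div 2 else Suc (m div 2) mod L)"

definition nb_multi_labelling ::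
  "nat \<Rightarrow> nat \<Rightarrow> nat \<Rightarrow> nat \<Rightarrow> (nat \<Rightarrow> nat) \<Rightarrow> (nat \<Rightarrow> nat list) \<Rightarrow> bool" where
  "nb_multi_labelling p n d L nl pl \<longleftrightarrow>
     (\<forall>k<L. nl k \<in> {1..n}) \<and>
     (\<forall>k<L. length (pl k) = d \<and> distinct (pl k) \<and> set (pl k) \<subseteq> {1..p}) \<and>
     (\<forall>k<L. nl k \<noteq> nl (Suc k mod L)) \<and>
     (\<forall>k<L. set (pl k) \<noteq> set (pl (Suc k mod L))) \<and>
     (\<forall>i j. even (card {m. m < 2 * L \<and> edge_nlab nl m = i \<and> j \<in> set (edge_ptup L pl m)}))"

definition r_tilde :: "nat \<Rightarrow> (nat \<Rightarrow> nat) \<Rightarrow> nat" where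
  "r_tilde L nl = card (nl ` {..<L})"

definition c_tilde :: "nat \<Rightarrow> (nat \<Rightarrow> nat list) \<Rightarrow> nat" where
  "c_tilde L pl = card (\<Union>k<L. set (pl k))"

definition Delta_bar :: "nat \<Rightarrow> nat \<Rightarrow> nat \<Rightarrow> (nat \<Rightarrow> nat) \<Rightarrow> (nat \<Rightarrow> nat list) \<Rightarrow> real" where
  "Delta_bar d l L nl pl =
     1 + real L / 2 + real d * real L / (2 * real l) - real (r_tilde L nl) - real (c_tilde L pl) / real l"

(* Sub-edges in traversal order: (edge index, n-label, p-label). *)
definition subedges :: "nat \<Rightarrow> (nat \<Rightarrow> nat) \<Rightarrow> (nat \<Rightarrow> nat list) \<Rightarrow> (nat \<times> nat \<times> nat) list" where
  "subedges L nl pl =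
     concat (map (\<lambda>m. map (\<lambda>j. (m, edge_nlab nl m, j)) (edge_ptup L pl m)) [0..<2 * L])"

(* Walk positions s = 0..2L: even s is p-vertex p_{(s div 2) mod L}, odd s is n-vertex n_{s div 2}.
   Edge m goes from position m to position m+1 (its later endpoint). A sub-edge is t1 if the
   label at its later endpoint did not appear on an earlier-visited vertex of the same kind. *)
definition is_t1 :: "nat \<Rightarrow> (nat \<Rightarrow> nat) \<Rightarrow> (nat \<Rightarrow> nat list) \<Rightarrow> nat \<times> nat \<times> nat \<Rightarrow> bool" where
  "is_t1 L nl pl se = (case se of (m, i, j) \<Rightarrow>
     (if even m then i \<notin> {nl (s div 2) | s. s < Suc m \<and> odd s}
      else j \<notin> (\<Union>{set (pl ((s div 2) mod L)) | s. s < Suc m \<and> even s})))"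

definition is_t3 :: "nat \<Rightarrow> (nat \<Rightarrow> nat) \<Rightarrow> (nat \<Rightarrow> nat list) \<Rightarrow> nat \<Rightarrow> bool" where
  "is_t3 L nl pl q = (let S = subedges L nl pl;
                          prev = filter (\<lambda>x. snd x = snd (S ! q)) (take q S)
                      in length prev = 1 \<and> is_t1 L nl pl (hd prev))"

definition subedge_positions :: "nat \<Rightarrow> (nat \<Rightarrow> nat) \<Rightarrow> (nat \<Rightarrow> nat list) \<Rightarrow> nat \<Rightarrow> nat set" where
  "subedge_positions L nl pl m = {q. q < length (subedges L nl pl) \<and> fst (subedges L nl pl ! q) = m}"

definition is_T1 :: "nat \<Rightarrow> (nat \<Rightarrow> nat) \<Rightarrow> (nat \<Rightarrow> nat list) \<Rightarrow> nat \<Rightarrow> bool" where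
  "is_T1 L nl pl m \<longleftrightarrow> (\<forall>q\<in>subedge_positions L nl pl m. is_t1 L nl pl (subedges L nl pl ! q))"

definition is_T3 :: "nat \<Rightarrow> (nat \<Rightarrow> nat) \<Rightarrow> (nat \<Rightarrow> nat list) \<Rightarrow> nat \<Rightarrow> bool" where
  "is_T3 L nl pl m \<longleftrightarrow> (\<forall>q\<in>subedge_positions L nl pl m. is_t3 L nl pl q)"

definition is_T4 :: "nat \<Rightarrow> (nat \<Rightarrow> nat) \<Rightarrow> (nat \<Rightarrow> nat list) \<Rightarrow> nat \<Rightarrow> bool" where
  "is_T4 L nl pl m \<longleftrightarrow> \<not> is_T1 L nl pl m \<and> \<not> is_T3 L nl pl m"

definition num_T4 :: "nat \<Rightarrow> (nat \<Rightarrow> nat) \<Rightarrow> (nat \<Rightarrow> nat list) \<Rightarrow> nat" where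
  "num_T4 L nl pl = card {m. m < 2 * L \<and> is_T4 L nl pl m}"

end

theory Submission
  imports Defs
begin


lemma concat_nth_const:
  assumes "\<And>m. m < k \<Longrightarrow> length (f m) = d"
  shows "length (concat (map f [0..<k])) = k * d \<and>
         (\<forall>q < k * d. concat (map f [0..<k]) ! q = f (q div d) ! (q mod d))"
  using assms
proof (induction k)
  case 0 then show ?case by simp
next
  case (Suc k)
  have IH: "length (concat (map f [0..<k])) = k * d \<and>
         (\<forall>q < k * d. concat (map f [0..<k]) ! q = f (q div d) ! (q mod d))"
    using Suc by simp
  have lk: "length (f k) = d" using Suc.prems by simp
  show ?case
  proof (intro conjI allI impI)
    show "length (concat (map f [0..<Suc k])) = Suc k * d" using IH lk by simp
  next
    fix q assume q: "q < Suc k * d"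
    show "concat (map f [0..<Suc k]) ! q = f (q div d) ! (q mod d)"
    proof (cases "q < k * d")
      case True then show ?thesis using IH by (simp add: nth_append)
    next
      case False
      then have "q - k * d < d" using q by simp
      moreover have "d > 0" using q False by (metis mult_0_right neq0_conv)
      ultimately have qd: "q div d = k" using False
        by (intro div_nat_eqI) (auto simp: algebra_simps)
      have "q mod d = q - k * d" using qd by (metis minus_div_mult_eq_mod)
      then show ?thesis using IH False lk qd by (simp add: nth_append)
    qed
  qed
qed

locale lab =
  fixes p n d L :: nat and nl :: "nat \<Rightarrow> nat" and pl :: "nat \<Rightarrow> nat list"
  assumes d1: "1 \<le> d" and L2: "2 \<le> L" and nb: "nb_multi_labelling p n d L nl pl"
begin

abbreviation "S \<equiv> subedges L nl pl"
abbreviation "N \<equiv> 2 * L * d"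
abbreviation "pt \<equiv> edge_ptup L pl"
abbreviation "nlab \<equiv> edge_nlab nl"

definition Jq :: "nat \<Rightarrow> nat" where "Jq q = pt (q div d) ! (q mod d)"
definition nnew :: "nat \<Rightarrow> bool" where "nnew k \<longleftrightarrow> (\<forall>s<k. nl s \<noteq> nl k)"
definition pold :: "nat \<Rightarrow> nat \<Rightarrow> bool" where "pold k j \<longleftrightarrow> (\<exists>s\<le>k. j \<in> set (pl s))"

lemma plen: "k < L \<Longrightarrow> length (pl k) = d"
  using nb unfolding nb_multi_labelling_def by blast
lemma pdist: "k < L \<Longrightarrow> distinct (pl k)"
  using nb unfolding nb_multi_labelling_def by blast
lemma nbn: "k < L \<Longrightarrow> nl k \<noteq> nl (Suc k mod L)"
  using nb unfolding nb_multi_labelling_def by blast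
lemma nbp: "k < L \<Longrightarrow> set (pl k) \<noteq> set (pl (Suc k mod L))"
  using nb unfolding nb_multi_labelling_def by blast
lemma evn: "even (card {m. m < 2 * L \<and> nlab m = i \<and> j \<in> set (pt m)})"
  using nb unfolding nb_multi_labelling_def by blast

lemma dpos: "0 < d" using d1 by simp
lemma Lpos: "0 < L" using L2 by simp

lemma pt_even[simp]: "pt (2 * k) = pl k" by (simp add: edge_ptup_def)
lemma pt_odd[simp]: "pt (Suc (2 * k)) = pl (Suc k mod L)" by (simp add: edge_ptup_def)
lemma nlab_even[simp]: "nlab (2 * k) = nl k" by (simp add: edge_nlab_def)
lemma nlab_odd[simp]: "nlab (Suc (2 * k)) = nl k" by (simp add: edge_nlab_def)

lemma pt_idx: "m < 2 * L \<Longrightarrow> \<exists>k<L. pt m = pl k"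
proof (cases "even m")
  case True
  assume "m < 2 * L" then show ?thesis using True
    by (intro exI[of _ "m div 2"]) (auto simp: edge_ptup_def)
next
  case False
  then show ?thesis using Lpos
    by (intro exI[of _ "Suc (m div 2) mod L"]) (auto simp: edge_ptup_def)
qed

lemma pt_len: "m < 2 * L \<Longrightarrow> length (pt m) = d"
  using pt_idx plen by metis
lemma pt_dist: "m < 2 * L \<Longrightarrow> distinct (pt m)"
  using pt_idx pdist by metis

lemma S_facts: "length S = N \<and> (\<forall>q<N. S ! q = (q div d, nlab (q div d), Jq q))"
proof -
  let ?f = "\<lambda>m. map (\<lambda>j. (m, edge_nlab nl m, j)) (edge_ptup L pl m)"
  have "length (concat (map ?f [0..<2*L])) = (2*L) * d \<and>
         (\<forall>q < (2*L) * d. concat (map ?f [0..<2*L]) ! q = ?f (q div d) ! (q mod d))"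
    by (rule concat_nth_const) (simp add: pt_len)
  moreover have "q < N \<Longrightarrow> q div d < 2 * L" for q
    by (simp add: div_less_iff_less_mult dpos mult.commute)
  moreover have "q < N \<Longrightarrow> q mod d < length (pt (q div d))" for q
    using calculation(2)[of q] pt_len dpos by simp
  ultimately show ?thesis unfolding subedges_def Jq_def by auto
qed

lemma S_len: "length S = N" using S_facts by simp
lemma S_nth: "q < N \<Longrightarrow> S ! q = (q div d, nlab (q div d), Jq q)" using S_facts by simp

lemma qdiv: "q < N \<Longrightarrow> q div d < 2 * L"
  by (simp add: div_less_iff_less_mult dpos mult.commute)
lemma qmod: "q mod d < d" using dpos by simp

lemma Jq_in: "q < N \<Longrightarrow> Jq q \<in> set (pt (q div d))"
  unfolding Jq_def using qdiv pt_len qmod by (metis nth_mem)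

lemma same_edge: "q1 < N \<Longrightarrow> q2 < N \<Longrightarrow> q1 div d = q2 div d \<Longrightarrow> Jq q1 = Jq q2 \<Longrightarrow> q1 = q2"
proof -
  assume a: "q1 < N" "q2 < N" "q1 div d = q2 div d" "Jq q1 = Jq q2"
  have "distinct (pt (q1 div d))" "length (pt (q1 div d)) = d"
    using a qdiv pt_dist pt_len by auto
  then have "q1 mod d = q2 mod d" using a qmod unfolding Jq_def
    by (metis nth_eq_iff_index_eq)
  then show ?thesis using a by (metis div_mult_mod_eq)
qed

lemma ex_q: "m < 2 * L \<Longrightarrow> j \<in> set (pt m) \<Longrightarrow> \<exists>q<N. q div d = m \<and> Jq q = j"
proof -
  assume m: "m < 2 * L" and j: "j \<in> set (pt m)"
  then obtain t where t: "t < d" "pt m ! t = j" using pt_len by (metis in_set_conv_nth)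
  define q where "q = m * d + t"
  have "q < (m + 1) * d" using t q_def by simp
  also have "\<dots> \<le> N" using m by (metis Suc_eq_plus1 Suc_leI mult.commute mult_le_mono2 mult.assoc)
  finally have "q < N" .
  moreover have "q div d = m" "q mod d = t" using t dpos q_def by auto
  ultimately show ?thesis using t unfolding Jq_def by auto
qed

lemma par: "\<exists>k. (x::nat) = 2 * k \<or> x = Suc (2 * k)" by presburger

lemma snd_S: "q < N \<Longrightarrow> snd (S ! q) = (nlab (q div d), Jq q)" using S_nth by simp
lemma fst_S: "q < N \<Longrightarrow> fst (S ! q) = q div d" using S_nth by simp

lemma occ: "card {q. q < N \<and> snd (S ! q) = (i, j)} = card {m. m < 2 * L \<and> nlab m = i \<and> j \<in> set (pt m)}"
proof -
  let ?Q = "{q. q < N \<and> snd (S ! q) = (i, j)}"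
  have inj: "inj_on (\<lambda>q. q div d) ?Q"
    by (rule inj_onI) (auto simp: snd_S intro: same_edge)
  have "(\<lambda>q. q div d) ` ?Q = {m. m < 2 * L \<and> nlab m = i \<and> j \<in> set (pt m)}"
  proof (rule set_eqI, rule iffI)
    fix m assume "m \<in> (\<lambda>q. q div d) ` ?Q"
    then obtain q where "q < N" "snd (S ! q) = (i, j)" "m = q div d" by auto
    then show "m \<in> {m. m < 2 * L \<and> nlab m = i \<and> j \<in> set (pt m)}"
      using qdiv Jq_in snd_S by auto
  next
    fix m assume "m \<in> {m. m < 2 * L \<and> nlab m = i \<and> j \<in> set (pt m)}"
    then have m: "m < 2 * L" "nlab m = i" "j \<in> set (pt m)" by auto
    then obtain q where "q < N" "q div d = m" "Jq q = j" using ex_q by blast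
    then show "m \<in> (\<lambda>q. q div d) ` ?Q" using m snd_S by force
  qed
  then show ?thesis using card_image[OF inj] by simp
qed

lemma is_t1_simp: "is_t1 L nl pl (m, i, j) = (if even m then i \<notin> {nl (s div 2) | s. s < Suc m \<and> odd s}
      else j \<notin> (\<Union>{set (pl ((s div 2) mod L)) | s. s < Suc m \<and> even s}))"
  unfolding is_t1_def by simp

lemma t1_even: assumes "q < N" "q div d = 2 * k" shows "is_t1 L nl pl (S ! q) \<longleftrightarrow> nnew k"
proof -
  have e: "{nl (s div 2) | s. s < Suc (2 * k) \<and> odd s} = nl ` {..<k}"
  proof (rule set_eqI, rule iffI)
    fix x assume "x \<in> {nl (s div 2) | s. s < Suc (2 * k) \<and> odd s}"
    then obtain s where "x = nl (s div 2)" "s < Suc (2 * k)" "odd s" by auto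
    then show "x \<in> nl ` {..<k}" by (auto elim!: oddE)
  next
    fix x assume "x \<in> nl ` {..<k}"
    then obtain t where "t < k" "x = nl t" by auto
    then show "x \<in> {nl (s div 2) | s. s < Suc (2 * k) \<and> odd s}"
      by (intro CollectI exI[of _ "Suc (2 * t)"]) auto
  qed
  have "is_t1 L nl pl (S ! q) \<longleftrightarrow> nl k \<notin> nl ` {..<k}" using assms unfolding S_nth[OF assms(1)] is_t1_simp
    by (simp only: assms(2) e even_mult_iff even_numeral if_True nlab_even simp_thms)
  moreover have "nl k \<notin> nl ` {..<k} \<longleftrightarrow> nnew k" unfolding nnew_def by (metis image_iff lessThan_iff)
  ultimately show ?thesis by simp
qed

lemma t1_odd: assumes "q < N" "q div d = Suc (2 * k)" shows "is_t1 L nl pl (S ! q) \<longleftrightarrow> \<not> pold k (Jq q)"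
proof -
  have kL: "k < L" using qdiv[OF assms(1)] assms(2) by simp
  have e: "(j \<in> \<Union>{set (pl ((s div 2) mod L)) | s. s < Suc (Suc (2 * k)) \<and> even s}) \<longleftrightarrow> pold k j" for j
  proof
    assume "j \<in> \<Union>{set (pl ((s div 2) mod L)) | s. s < Suc (Suc (2 * k)) \<and> even s}"
    then obtain s where "j \<in> set (pl ((s div 2) mod L))" "s < Suc (Suc (2 * k))" "even s" by auto
    then show "pold k j" unfolding pold_def using kL
      by (intro exI[of _ "s div 2"]) (auto elim!: evenE)
  next
    assume "pold k j"
    then obtain t where "t \<le> k" "j \<in> set (pl t)" unfolding pold_def by auto
    then show "j \<in> \<Union>{set (pl ((s div 2) mod L)) | s. s < Suc (Suc (2 * k)) \<and> even s}"
      using kL by (intro UnionI[of "set (pl t)"]) (auto intro!: exI[of _ "2 * t"])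
  qed
  show ?thesis using assms unfolding S_nth[OF assms(1)] is_t1_simp
    by (simp only: assms(2) e even_Suc even_mult_iff even_numeral if_False not_True_eq_False simp_thms) 
qed

lemma no_prev:
  assumes "q < N" "\<forall>m'<q div d. \<not> (nlab m' = nlab (q div d) \<and> Jq q \<in> set (pt m'))" "q' < q"
  shows "snd (S ! q') \<noteq> snd (S ! q)"
proof
  assume eq: "snd (S ! q') = snd (S ! q)"
  have q'N: "q' < N" using assms by simp
  have le: "q' div d \<le> q div d" using assms(3) by (simp add: div_le_mono)
  show False
  proof (cases "q' div d = q div d")
    case True
    then have "Jq q' = Jq q" using eq snd_S q'N assms(1) by simp
    then show False using same_edge[OF q'N assms(1) True] assms(3) by simp
  next
    case False
    then have "q' div d < q div d" using le by simp
    moreover have "nlab (q' div d) = nlab (q div d)" "Jq q = Jq q'" using eq snd_S q'N assms(1) by auto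
    ultimately show False using assms(2) Jq_in[OF q'N] by auto
  qed
qed

lemma t1_noprev: assumes "q < N" "is_t1 L nl pl (S ! q)"
  shows "\<forall>m'<q div d. \<not> (nlab m' = nlab (q div d) \<and> Jq q \<in> set (pt m'))"
proof (intro allI impI notI)
  fix m' assume m': "m' < q div d" and c: "nlab m' = nlab (q div d) \<and> Jq q \<in> set (pt m')"
  have qd: "q div d < 2 * L" using qdiv assms by simp
  obtain k where k: "q div d = 2 * k \<or> q div d = Suc (2 * k)" using par by blast
  then show False
  proof
    assume a: "q div d = 2 * k"
    then have "nnew k" using t1_even assms by blast
    moreover have "m' div 2 < k" using m' a by simp
    moreover have "nl (m' div 2) = nl k" using c a by (simp add: edge_nlab_def)
    ultimately show False unfolding nnew_def by blast
  next
    assume a: "q div d = Suc (2 * k)"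
    then have np: "\<not> pold k (Jq q)" using t1_odd assms by blast
    have kL: "k < L" using qd a by simp
    obtain s where s: "m' = 2 * s \<or> m' = Suc (2 * s)" using par by blast
    then show False
    proof
      assume "m' = 2 * s"
      then have "s \<le> k" "Jq q \<in> set (pl s)" using m' a c by auto
      then show False using np unfolding pold_def by blast
    next
      assume ms: "m' = Suc (2 * s)"
      then have "Suc s \<le> k" using m' a by simp
      then have "Suc s mod L = Suc s" using kL by simp
      then have "Jq q \<in> set (pl (Suc s))" using c ms by simp
      then show False using np \<open>Suc s \<le> k\<close> unfolding pold_def by blast
    qed
  qed
qed

lemma prev_card: "q < N \<Longrightarrow> length (filter (\<lambda>x. snd x = snd (S ! q)) (take q S)) = card {q'. q' < q \<and> snd (S ! q') = snd (S ! q)}"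
proof -
  assume "q < N"
  have "{i. i < length (take q S) \<and> snd (take q S ! i) = snd (S ! q)} = {q'. q' < q \<and> snd (S ! q') = snd (S ! q)}"
    using \<open>q < N\<close> by (auto simp: S_len)
  then show ?thesis by (simp only: length_filter_conv_card)
qed

lemma noprev_not_t3: "q < N \<Longrightarrow> (\<forall>q'<q. snd (S ! q') \<noteq> snd (S ! q)) \<Longrightarrow> \<not> is_t3 L nl pl q"
proof -
  assume a: "q < N" "\<forall>q'<q. snd (S ! q') \<noteq> snd (S ! q)"
  then have "{q'. q' < q \<and> snd (S ! q') = snd (S ! q)} = {}" by auto
  then have "card {q'. q' < q \<and> snd (S ! q') = snd (S ! q)} = 0" by (metis card.empty)
  then have "length (filter (\<lambda>x. snd x = snd (S ! q)) (take q S)) = 0"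
    using prev_card[OF a(1)] by linarith
  then show ?thesis unfolding is_t3_def Let_def by simp
qed

lemma t1_not_t3: "q < N \<Longrightarrow> is_t1 L nl pl (S ! q) \<Longrightarrow> \<not> is_t3 L nl pl q"
  using noprev_not_t3 no_prev t1_noprev by blast

lemma t3_of_unique: assumes "q < N" "{q'. q' < q \<and> snd (S ! q') = snd (S ! q)} = {q0}" "is_t1 L nl pl (S ! q0)"
  shows "is_t3 L nl pl q"
proof -
  let ?P = "\<lambda>x. snd x = snd (S ! q)"
  let ?F = "filter ?P (take q S)"
  have l: "length ?F = 1" using prev_card[OF assms(1)] assms(2) by simp
  then have "hd ?F \<in> set ?F" by (metis hd_in_set length_0_conv zero_neq_one)
  then have h: "hd ?F \<in> set (take q S)" "?P (hd ?F)" by auto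
  then obtain i where i: "i < length (take q S)" "take q S ! i = hd ?F" by (metis in_set_conv_nth)
  then have "i < q" "S ! i = hd ?F" by auto
  then have "i \<in> {q'. q' < q \<and> snd (S ! q') = snd (S ! q)}" using h by auto
  then have "i = q0" using assms(2) by auto
  then have "hd ?F = S ! q0" using \<open>S ! i = hd ?F\<close> by simp
  then show ?thesis using l assms(3) unfolding is_t3_def Let_def by simp
qed

end

context lab begin
lemma occ_even: "even (card {q. q < N \<and> snd (S ! q) = x})"
proof -
  obtain i j where "x = (i, j)" by (cases x)
  then show ?thesis using occ[of i j] evn[of i j] by simp
qed

lemma t1_next: assumes "q < N" "is_t1 L nl pl (S ! q)"
  shows "\<exists>q2. q < q2 \<and> q2 < N \<and> snd (S ! q2) = snd (S ! q)"
proof (rule ccontr)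
  assume c: "\<not> ?thesis"
  let ?X = "{q'. q' < N \<and> snd (S ! q') = snd (S ! q)}"
  have "?X \<subseteq> {q}"
  proof
    fix q' assume q': "q' \<in> ?X"
    show "q' \<in> {q}"
    proof (cases "q' < q")
      case True
      then show ?thesis using no_prev[OF assms(1) t1_noprev[OF assms] True] q' by simp
    next
      case False
      then show ?thesis using c q' by (cases "q' = q") auto
    qed
  qed
  moreover have "q \<in> ?X" using assms by simp
  ultimately have "?X = {q}" by blast
  then show False using occ_even[of "snd (S ! q)"] by simp
qed

definition nxt :: "nat \<Rightarrow> nat" where
  "nxt q = (LEAST q2. q < q2 \<and> q2 < N \<and> snd (S ! q2) = snd (S ! q))"

lemma nxt_props: assumes "q < N" "is_t1 L nl pl (S ! q)"
  shows "q < nxt q \<and> nxt q < N \<and> {q'. q' < nxt q \<and> snd (S ! q') = snd (S ! nxt q)} = {q}"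
proof -
  let ?P = "\<lambda>q2. q < q2 \<and> q2 < N \<and> snd (S ! q2) = snd (S ! q)"
  have P: "?P (nxt q)" unfolding nxt_def using t1_next[OF assms] by (rule LeastI_ex)
  have m: "\<And>q'. q' < nxt q \<Longrightarrow> \<not> ?P q'" unfolding nxt_def by (rule not_less_Least)
  have "{q'. q' < nxt q \<and> snd (S ! q') = snd (S ! nxt q)} = {q}"
  proof (rule set_eqI, rule iffI)
    fix q' assume "q' \<in> {q'. q' < nxt q \<and> snd (S ! q') = snd (S ! nxt q)}"
    then have q': "q' < nxt q" "snd (S ! q') = snd (S ! q)" using P by auto
    show "q' \<in> {q}"
    proof (cases "q' < q")
      case True
      then show ?thesis using no_prev[OF assms(1) t1_noprev[OF assms] True] q' by simp
    next
      case False
      then show ?thesis using m[OF q'(1)] q' P by (cases "q' = q") auto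
    qed
  next
    fix q' assume "q' \<in> {q}"
    then show "q' \<in> {q'. q' < nxt q \<and> snd (S ! q') = snd (S ! nxt q)}" using P by auto
  qed
  then show ?thesis using P by simp
qed

lemma nxt_lt: assumes "q < N" "is_t1 L nl pl (S ! q)" shows "nxt q < N"
  by (rule conjunct1[OF conjunct2[OF nxt_props[OF assms]]])
lemma nxt_uniq: assumes "q < N" "is_t1 L nl pl (S ! q)"
  shows "{q'. q' < nxt q \<and> snd (S ! q') = snd (S ! nxt q)} = {q}"
  by (rule conjunct2[OF conjunct2[OF nxt_props[OF assms]]])

definition "T1s = {q. q < N \<and> is_t1 L nl pl (S ! q)}"
definition "T3s = {q. q < N \<and> is_t3 L nl pl q}"
definition "T4s = {q. q < N \<and> \<not> is_t1 L nl pl (S ! q) \<and> \<not> is_t3 L nl pl q}"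

lemma card_T1_T3: "card T1s \<le> card T3s"
proof (rule card_inj_on_le[where f = nxt])
  show "inj_on nxt T1s"
  proof (rule inj_onI)
    fix a b assume "a \<in> T1s" "b \<in> T1s" "nxt a = nxt b"
    then have a: "a < N" "is_t1 L nl pl (S ! a)" and b: "b < N" "is_t1 L nl pl (S ! b)"
      and e: "nxt a = nxt b" unfolding T1s_def by auto
    have A: "{q'. q' < nxt a \<and> snd (S ! q') = snd (S ! nxt a)} = {a}" by (rule nxt_uniq[OF a])
    have B: "{q'. q' < nxt b \<and> snd (S ! q') = snd (S ! nxt b)} = {b}" by (rule nxt_uniq[OF b])
    have "{a} = {b}" using trans[OF A[unfolded e, symmetric] B] .
    then show "a = b" by simp
  qed
  show "nxt ` T1s \<subseteq> T3s"
  proof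
    fix z assume "z \<in> nxt ` T1s"
    then obtain q where q: "q \<in> T1s" "z = nxt q" by auto
    then have a: "q < N" "is_t1 L nl pl (S ! q)" unfolding T1s_def by auto
    have p1: "nxt q < N" by (rule nxt_lt[OF a])
    have p2: "{q'. q' < nxt q \<and> snd (S ! q') = snd (S ! nxt q)} = {q}" by (rule nxt_uniq[OF a])
    have "is_t3 L nl pl (nxt q)" by (rule t3_of_unique[OF p1 p2 a(2)])
    then show "z \<in> T3s" using p1 q(2) unfolding T3s_def by simp
  qed
  show "finite T3s" unfolding T3s_def by simp
qed

lemma card_T4: "card T4s + 2 * card T1s \<le> N"
proof -
  have u: "{..<N} = T1s \<union> T3s \<union> T4s" unfolding T1s_def T3s_def T4s_def by auto
  have d1: "T1s \<inter> T3s = {}" unfolding T1s_def T3s_def using t1_not_t3 by auto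
  have d2: "(T1s \<union> T3s) \<inter> T4s = {}" unfolding T1s_def T3s_def T4s_def by auto
  have f: "finite T1s" "finite T3s" "finite T4s" unfolding T1s_def T3s_def T4s_def by auto
  have "card (T1s \<union> T3s \<union> T4s) = N" unfolding u[symmetric] by simp
  then have "N = card (T1s \<union> T3s \<union> T4s)" by simp
  also have "\<dots> = card T1s + card T3s + card T4s" using f d1 d2 by (simp add: card_Un_disjoint)
  finally show ?thesis using card_T1_T3 by simp
qed

end

context lab begin

definition blk :: "nat \<Rightarrow> nat set" where "blk m = {q. q < N \<and> q div d = m}"

lemma blk_filter: assumes "m < 2 * L"
  shows "card {q. q < N \<and> q div d = m \<and> P (Jq q)} = card {j \<in> set (pt m). P j}"
proof -
  let ?Q = "{q. q < N \<and> q div d = m \<and> P (Jq q)}"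
  have inj: "inj_on Jq ?Q" by (rule inj_onI) (auto intro: same_edge)
  have "Jq ` ?Q = {j \<in> set (pt m). P j}"
  proof (rule set_eqI, rule iffI)
    fix j assume "j \<in> Jq ` ?Q"
    then show "j \<in> {j \<in> set (pt m). P j}" using Jq_in by auto
  next
    fix j assume j: "j \<in> {j \<in> set (pt m). P j}"
    then obtain q where "q < N" "q div d = m" "Jq q = j" using ex_q assms by blast
    then show "j \<in> Jq ` ?Q" using j by force
  qed
  then show ?thesis using card_image[OF inj] by simp
qed

lemma blk_card: "m < 2 * L \<Longrightarrow> card {q. q < N \<and> q div d = m \<and> True} = d"
  using blk_filter[of m "\<lambda>_. True"] pt_len pt_dist by (simp add: distinct_card)

lemma card_split: assumes "X \<subseteq> {..<N}" shows "card X = (\<Sum>m<2*L. card (X \<inter> blk m))"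
proof -
  have "X = (\<Union>m<2*L. X \<inter> blk m)" using assms qdiv unfolding blk_def by auto
  moreover have "card (\<Union>m<2*L. X \<inter> blk m) = (\<Sum>m<2*L. card (X \<inter> blk m))"
  proof (rule card_UN_disjoint)
    show "finite {..<2*L}" by simp
    show "\<forall>i\<in>{..<2*L}. finite (X \<inter> blk i)" unfolding blk_def by auto
    show "\<forall>i\<in>{..<2*L}. \<forall>j\<in>{..<2*L}. i \<noteq> j \<longrightarrow> X \<inter> blk i \<inter> (X \<inter> blk j) = {}"
      unfolding blk_def by auto
  qed
  ultimately show ?thesis by simp
qed

lemma sum_split2: "(\<Sum>m<2*K. f m) = (\<Sum>k<K. f (2*k) + f (Suc (2*k)))"
  by (induction K) (auto simp: add.assoc)

lemma r_count: "card (nl ` {..<K}) = (\<Sum>k<K. if nnew k then 1 else 0)"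
proof (induction K)
  case 0 then show ?case by simp
next
  case (Suc K)
  have e: "nl ` {..<Suc K} = insert (nl K) (nl ` {..<K})" by (simp add: lessThan_Suc)
  have "nl K \<in> nl ` {..<K} \<longleftrightarrow> \<not> nnew K" unfolding nnew_def by (metis image_iff lessThan_iff)
  then show ?case using Suc e by (simp add: card_insert_if)
qed

lemma pold_Suc: "pold (Suc k) j \<longleftrightarrow> pold k j \<or> j \<in> set (pl (Suc k))"
  unfolding pold_def by (metis le_Suc_eq)

lemma pold_fin: "finite {j. pold k j}"
proof -
  have "{j. pold k j} = (\<Union>s\<le>k. set (pl s))" unfolding pold_def by auto
  then show ?thesis by simp
qed

lemma U_card: "K < L \<Longrightarrow> card {j. pold K j} = d + (\<Sum>k<K. card {j \<in> set (pl (Suc k)). \<not> pold k j})"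
proof (induction K)
  case 0
  have "{j. pold 0 j} = set (pl 0)" unfolding pold_def by auto
  then show ?case using plen[of 0] pdist[of 0] Lpos by (simp add: distinct_card)
next
  case (Suc K)
  have e: "{j. pold (Suc K) j} = {j. pold K j} \<union> {j \<in> set (pl (Suc K)). \<not> pold K j}"
    using pold_Suc by auto
  have "card {j. pold (Suc K) j} = card {j. pold K j} + card {j \<in> set (pl (Suc K)). \<not> pold K j}"
    unfolding e by (rule card_Un_disjoint) (auto simp: pold_fin)
  then show ?case using Suc by simp
qed

lemma t1_blk_even: "k < L \<Longrightarrow> card (T1s \<inter> blk (2 * k)) = (if nnew k then d else 0)"
proof -
  assume k: "k < L"
  have "T1s \<inter> blk (2 * k) = (if nnew k then {q. q < N \<and> q div d = 2 * k \<and> True} else {})"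
    unfolding T1s_def blk_def using t1_even by auto
  then show ?thesis using blk_card[of "2 * k"] k by simp
qed

lemma t1_blk_odd: "k < L \<Longrightarrow> card (T1s \<inter> blk (Suc (2 * k))) = card {j \<in> set (pl (Suc k mod L)). \<not> pold k j}"
proof -
  assume k: "k < L"
  have "T1s \<inter> blk (Suc (2 * k)) = {q. q < N \<and> q div d = Suc (2 * k) \<and> \<not> pold k (Jq q)}"
    unfolding T1s_def blk_def using t1_odd by auto
  then show ?thesis using blk_filter[of "Suc (2 * k)" "\<lambda>j. \<not> pold k j"] k by simp
qed

lemma card_T1s: "card T1s + d = d * r_tilde L nl + c_tilde L pl"
proof -
  obtain L' where L': "L = Suc L'" using Lpos by (metis gr0_conv_Suc)
  have "card T1s = (\<Sum>m<2*L. card (T1s \<inter> blk m))" by (rule card_split) (auto simp: T1s_def)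
  also have "\<dots> = (\<Sum>k<L. card (T1s \<inter> blk (2*k)) + card (T1s \<inter> blk (Suc (2*k))))" by (rule sum_split2)
  also have "\<dots> = (\<Sum>k<L. (if nnew k then d else 0) + card {j \<in> set (pl (Suc k mod L)). \<not> pold k j})"
    by (rule sum.cong) (auto simp: t1_blk_even t1_blk_odd)
  also have "\<dots> = (\<Sum>k<L. (if nnew k then d else 0)) + (\<Sum>k<L. card {j \<in> set (pl (Suc k mod L)). \<not> pold k j})"
    by (simp add: sum.distrib)
  finally have a: "card T1s = (\<Sum>k<L. (if nnew k then d else 0)) + (\<Sum>k<L. card {j \<in> set (pl (Suc k mod L)). \<not> pold k j})" .
  have r: "(\<Sum>k<L. (if nnew k then d else 0)) = d * r_tilde L nl"
    unfolding r_tilde_def r_count sum_distrib_left by (rule sum.cong) auto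
  have o1: "(\<Sum>k<L. card {j \<in> set (pl (Suc k mod L)). \<not> pold k j}) = (\<Sum>k<L'. card {j \<in> set (pl (Suc k)). \<not> pold k j})"
  proof -
    have last: "card {j \<in> set (pl (Suc L' mod L)). \<not> pold L' j} = 0"
    proof -
      have "Suc L' mod L = 0" using L' by simp
      then have "{j \<in> set (pl (Suc L' mod L)). \<not> pold L' j} = {}" unfolding pold_def by auto
      then show ?thesis by simp
    qed
    have "(\<Sum>k<L. card {j \<in> set (pl (Suc k mod L)). \<not> pold k j}) = (\<Sum>k<L'. card {j \<in> set (pl (Suc k mod L)). \<not> pold k j})"
      using last L' by simp
    also have "\<dots> = (\<Sum>k<L'. card {j \<in> set (pl (Suc k)). \<not> pold k j})"
      by (rule sum.cong) (auto simp: L')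
    finally show ?thesis .
  qed
  have c: "c_tilde L pl = card {j. pold L' j}"
  proof -
    have "(\<Union>k<L. set (pl k)) = {j. pold L' j}" unfolding pold_def using L' by (auto simp: less_Suc_eq_le)
    then show ?thesis unfolding c_tilde_def by simp
  qed
  show ?thesis using a r o1 c U_card[of L'] L' by simp
qed

end

context lab begin

lemma nmult: assumes k: "k < L" shows "\<exists>k'. k' < L \<and> k' \<noteq> k \<and> nl k' = nl k"
proof (rule ccontr)
  assume c: "\<not> ?thesis"
  let ?k1 = "Suc k mod L"
  have k1: "?k1 < L" using Lpos by simp
  obtain j where j: "(j \<in> set (pl k)) \<noteq> (j \<in> set (pl ?k1))" using nbp[OF k] by blast
  define E where "E = {m. m < 2 * L \<and> nlab m = nl k \<and> j \<in> set (pt m)}"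
  have sub: "E \<subseteq> {2 * k, Suc (2 * k)}"
  proof
    fix m assume "m \<in> E"
    then have m: "m < 2 * L" "nlab m = nl k" "j \<in> set (pt m)" unfolding E_def by auto
    then have "nl (m div 2) = nl k" "m div 2 < L" by (auto simp: edge_nlab_def)
    then have "m div 2 = k" using c by blast
    then show "m \<in> {2 * k, Suc (2 * k)}" by auto
  qed
  have e1: "2 * k \<in> E \<longleftrightarrow> j \<in> set (pl k)" using k unfolding E_def by simp
  have e2: "Suc (2 * k) \<in> E \<longleftrightarrow> j \<in> set (pl ?k1)" using k unfolding E_def by simp
  have "E = {2 * k} \<or> E = {Suc (2 * k)}"
  proof (cases "j \<in> set (pl k)")
    case True
    then have "E = {2 * k}" using sub e1 e2 j by blast
    then show ?thesis by simp
  next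
    case False
    then have "E = {Suc (2 * k)}" using sub e1 e2 j by blast
    then show ?thesis by simp
  qed
  then have "card E = 1" by (elim disjE) simp_all
  then show False using evn[of "nl k" j] unfolding E_def by simp
qed

lemma r_bound: "2 * r_tilde L nl \<le> L"
proof -
  let ?R = "nl ` {..<L}"
  have u: "{..<L} = (\<Union>i\<in>?R. {k. k < L \<and> nl k = i})" by auto
  have "card (\<Union>i\<in>?R. {k. k < L \<and> nl k = i}) = (\<Sum>i\<in>?R. card {k. k < L \<and> nl k = i})"
    by (rule card_UN_disjoint) auto
  then have L: "L = (\<Sum>i\<in>?R. card {k. k < L \<and> nl k = i})" using u by (metis card_lessThan)
  have "\<And>i. i \<in> ?R \<Longrightarrow> 2 \<le> card {k. k < L \<and> nl k = i}"
  proof -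
    fix i assume "i \<in> ?R"
    then obtain k where k: "k < L" "nl k = i" by auto
    then obtain k' where k': "k' < L" "k' \<noteq> k" "nl k' = nl k" using nmult by blast
    have "{k, k'} \<subseteq> {k. k < L \<and> nl k = i}" using k k' by auto
    then have "card {k, k'} \<le> card {k. k < L \<and> nl k = i}" by (intro card_mono) auto
    then show "2 \<le> card {k. k < L \<and> nl k = i}" using k' by simp
  qed
  then have "(\<Sum>i\<in>?R. 2) \<le> (\<Sum>i\<in>?R. card {k. k < L \<and> nl k = i})" by (rule sum_mono)
  then show ?thesis using L unfolding r_tilde_def by simp
qed

definition pm :: "nat \<Rightarrow> nat" where "pm j = card {k. k < L \<and> j \<in> set (pl k)}"

lemma odd_edge_cases: assumes "t < L" "Suc t mod L = k"
  shows "(k = 0 \<and> t = L - 1) \<or> (k \<ge> 1 \<and> t = k - 1)"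
proof (cases "Suc t = L")
  case True then show ?thesis using assms by auto
next
  case False then have "Suc t < L" using assms by simp
  then show ?thesis using assms by auto
qed

lemma pmult2: assumes k: "k < L" and j: "j \<in> set (pl k)" shows "\<exists>k'. k' < L \<and> k' \<noteq> k \<and> j \<in> set (pl k')"
proof (rule ccontr)
  assume c: "\<not> ?thesis"
  have c': "\<And>k'. k' < L \<Longrightarrow> j \<in> set (pl k') \<Longrightarrow> k' = k" using c by blast
  define mo where "mo = (if k = 0 then Suc (2 * (L - 1)) else Suc (2 * (k - 1)))"
  define E where "E = {m. m < 2 * L \<and> nlab m = nl k \<and> j \<in> set (pt m)}"
  have sub: "E \<subseteq> {2 * k, mo}"
  proof
    fix m assume "m \<in> E"
    then have m: "m < 2 * L" "j \<in> set (pt m)" unfolding E_def by auto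
    obtain t where t: "m = 2 * t \<or> m = Suc (2 * t)" using par by blast
    then show "m \<in> {2 * k, mo}"
    proof
      assume mt: "m = 2 * t"
      then have "t < L" "j \<in> set (pl t)" using m by auto
      then have "t = k" by (rule c')
      then show ?thesis using mt by simp
    next
      assume mt: "m = Suc (2 * t)"
      then have tL: "t < L" and jt: "j \<in> set (pl (Suc t mod L))" using m by auto
      have "Suc t mod L < L" using Lpos by simp
      then have sk: "Suc t mod L = k" using jt by (rule c')
      have "(k = 0 \<and> t = L - 1) \<or> (k \<ge> 1 \<and> t = k - 1)" by (rule odd_edge_cases[OF tL sk])
      then have "m = mo" unfolding mo_def mt by (elim disjE conjE) simp_all
      then show ?thesis by simp
    qed
  qed
  have "nlab mo \<noteq> nl k"
  proof (cases "k = 0")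
    case True
    have "L - 1 < L" using Lpos by simp
    then have "nl (L - 1) \<noteq> nl (Suc (L - 1) mod L)" by (rule nbn)
    moreover have "Suc (L - 1) mod L = 0" using Lpos by simp
    ultimately show ?thesis using True unfolding mo_def by simp
  next
    case False
    have "k - 1 < L" using k by simp
    then have "nl (k - 1) \<noteq> nl (Suc (k - 1) mod L)" by (rule nbn)
    moreover have "Suc (k - 1) mod L = k" using False k by simp
    ultimately show ?thesis using False unfolding mo_def by simp
  qed
  then have "mo \<notin> E" unfolding E_def by simp
  moreover have "2 * k \<in> E" using k j unfolding E_def by simp
  ultimately have "E = {2 * k}" using sub by blast
  then show False using evn[of "nl k" j] unfolding E_def by simp
qed

lemma pm3: assumes k1: "1 \<le> k" and k2: "Suc k < L" and nn: "nnew (Suc k)"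
  and j1: "j \<in> set (pl k)" and j2: "j \<in> set (pl (Suc k))"
  shows "\<exists>k'. k' < L \<and> k' \<noteq> k \<and> k' \<noteq> Suc k \<and> j \<in> set (pl k')"
proof (rule ccontr)
  assume c: "\<not> ?thesis"
  let ?a = "nl (k - 1)"
  define E where "E = {m. m < 2 * L \<and> nlab m = ?a \<and> j \<in> set (pt m)}"
  have ka: "nl k \<noteq> ?a"
  proof -
    have "k - 1 < L" using k2 by simp
    then have "nl (k - 1) \<noteq> nl (Suc (k - 1) mod L)" by (rule nbn)
    then show ?thesis using k1 k2 by simp
  qed
  have "k - 1 < Suc k" by simp
  then have kb: "nl (Suc k) \<noteq> ?a" using nn unfolding nnew_def by auto
  have sub: "E \<subseteq> {Suc (2 * (k - 1))}"
  proof
    fix m assume "m \<in> E"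
    then have m: "m < 2 * L" "nlab m = ?a" "j \<in> set (pt m)" unfolding E_def by auto
    obtain t where t: "m = 2 * t \<or> m = Suc (2 * t)" using par by blast
    then show "m \<in> {Suc (2 * (k - 1))}"
    proof
      assume "m = 2 * t"
      then have "t < L" "j \<in> set (pl t)" "nl t = ?a" using m by auto
      then have "t = k \<or> t = Suc k" using c by blast
      then show ?thesis using \<open>nl t = ?a\<close> ka kb by auto
    next
      assume mt: "m = Suc (2 * t)"
      then have tL: "t < L" and jt: "j \<in> set (pl (Suc t mod L))" and nt: "nl t = ?a" using m by auto
      have "Suc t mod L < L" using Lpos by simp
      then have "Suc t mod L = k \<or> Suc t mod L = Suc k" using c jt by blast
      moreover have "Suc t mod L = k \<Longrightarrow> t = k - 1" using odd_edge_cases[OF tL] k1 by fastforce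
      moreover have "Suc t mod L = Suc k \<Longrightarrow> t = k" using odd_edge_cases[OF tL] by fastforce
      ultimately have "t = k - 1 \<or> t = k" by blast
      then show ?thesis using mt nt ka by auto
    qed
  qed
  moreover have "Suc (2 * (k - 1)) \<in> E" using k1 k2 j1 unfolding E_def by auto
  ultimately have "E = {Suc (2 * (k - 1))}" by blast
  then show False using evn[of ?a j] unfolding E_def by simp
qed

end

context lab begin

definition "Uset = (\<Union>k<L. set (pl k))"

lemma Uset_fin: "finite Uset" unfolding Uset_def by simp

lemma pm_ge2: "j \<in> Uset \<Longrightarrow> 2 \<le> pm j"
proof -
  assume "j \<in> Uset"
  then obtain k where k: "k < L" "j \<in> set (pl k)" unfolding Uset_def by auto
  then obtain k' where k': "k' < L" "k' \<noteq> k" "j \<in> set (pl k')" using pmult2 by blast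
  have "{k, k'} \<subseteq> {k. k < L \<and> j \<in> set (pl k)}" using k k' by auto
  then have "card {k, k'} \<le> pm j" unfolding pm_def by (intro card_mono) auto
  then show ?thesis using k' by simp
qed

lemma sum_pm: "(\<Sum>j\<in>Uset. pm j) = d * L"
proof -
  have "(\<Sum>j\<in>Uset. pm j) = card (SIGMA j:Uset. {k. k < L \<and> j \<in> set (pl k)})"
    unfolding pm_def by (subst card_SigmaI) (auto simp: Uset_fin)
  also have "(SIGMA j:Uset. {k. k < L \<and> j \<in> set (pl k)}) = (\<lambda>(k, j). (j, k)) ` (SIGMA k:{..<L}. set (pl k))"
    unfolding Uset_def by auto
  also have "card \<dots> = card (SIGMA k:{..<L}. set (pl k))"
    by (rule card_image) (auto simp: inj_on_def)
  also have "\<dots> = (\<Sum>k<L. card (set (pl k)))" by (subst card_SigmaI) auto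
  also have "\<dots> = (\<Sum>k<L. d)" by (rule sum.cong) (auto simp: distinct_card plen pdist)
  finally show ?thesis by simp
qed

definition "W = {(j, k). k < L \<and> j \<in> set (pl k) \<and> 3 \<le> pm j}"

lemma W_bound: "card W + 6 * c_tilde L pl \<le> 3 * d * L"
proof -
  let ?U3 = "{j \<in> Uset. 3 \<le> pm j}"
  have "W = (SIGMA j:?U3. {k. k < L \<and> j \<in> set (pl k)})" unfolding W_def Uset_def by auto
  then have "card W = (\<Sum>j\<in>?U3. pm j)" unfolding pm_def by (simp add: Uset_fin)
  also have "\<dots> \<le> (\<Sum>j\<in>?U3. 3 * (pm j - 2))" by (rule sum_mono) auto
  also have "\<dots> \<le> (\<Sum>j\<in>Uset. 3 * (pm j - 2))" by (rule sum_mono2) (auto simp: Uset_fin)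
  finally have a: "card W \<le> 3 * (\<Sum>j\<in>Uset. (pm j - 2))" by (simp add: sum_distrib_left)
  have "(\<Sum>j\<in>Uset. (pm j - 2)) + 2 * card Uset = (\<Sum>j\<in>Uset. (pm j - 2) + 2)"
    unfolding sum.distrib by (simp add: mult.commute)
  also have "\<dots> = (\<Sum>j\<in>Uset. pm j)" by (rule sum.cong) (auto dest: pm_ge2)
  finally have b: "(\<Sum>j\<in>Uset. (pm j - 2)) + 2 * card Uset = d * L" using sum_pm by simp
  have "c_tilde L pl = card Uset" unfolding c_tilde_def Uset_def by simp
  then show ?thesis using a b by simp
qed

end

context lab begin

definition t4e :: "nat \<Rightarrow> bool" where
  "t4e m \<longleftrightarrow> (\<exists>q. q < N \<and> q div d = m \<and> \<not> is_t1 L nl pl (S ! q) \<and> \<not> is_t3 L nl pl q)"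

definition "T4E = {m. m < 2 * L \<and> t4e m}"

lemma T4E_card: "card T4E \<le> card T4s"
proof -
  have "T4E \<subseteq> (\<lambda>q. q div d) ` T4s"
  proof
    fix m assume "m \<in> T4E"
    then obtain q where "q < N" "q div d = m" "\<not> is_t1 L nl pl (S ! q)" "\<not> is_t3 L nl pl q"
      unfolding T4E_def t4e_def by blast
    then show "m \<in> (\<lambda>q. q div d) ` T4s" unfolding T4s_def by force
  qed
  then have "card T4E \<le> card ((\<lambda>q. q div d) ` T4s)" by (rule card_mono[rotated]) (simp add: T4s_def)
  also have "\<dots> \<le> card T4s" by (rule card_image_le) (simp add: T4s_def)
  finally show ?thesis .
qed

lemma mk_t4: assumes "q < N" "\<not> is_t1 L nl pl (S ! q)"
  "\<forall>m'<q div d. \<not> (nlab m' = nlab (q div d) \<and> Jq q \<in> set (pt m'))"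
  shows "t4e (q div d)"
proof -
  have "\<forall>q'<q. snd (S ! q') \<noteq> snd (S ! q)" using no_prev[OF assms(1) assms(3)] by blast
  then have "\<not> is_t3 L nl pl q" using noprev_not_t3 assms(1) by blast
  then show ?thesis unfolding t4e_def using assms(1,2) by blast
qed

lemma edgeL1: assumes t1: "1 \<le> t" and tL: "t < L" and x: "x \<in> set (pl t)" and xn: "\<not> pold (t - 1) x"
  and nn: "\<not> nnew t"
  shows "t4e (2 * t)"
proof -
  obtain q where q: "q < N" "q div d = 2 * t" "Jq q = x" using ex_q[of "2 * t" x] tL x by auto
  have nt1: "\<not> is_t1 L nl pl (S ! q)" using t1_even[OF q(1) q(2)] nn by simp
  have "\<forall>m'<q div d. \<not> (nlab m' = nlab (q div d) \<and> Jq q \<in> set (pt m'))"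
  proof (intro allI impI notI)
    fix m' assume m': "m' < q div d" and c: "nlab m' = nlab (q div d) \<and> Jq q \<in> set (pt m')"
    obtain s where s: "m' = 2 * s \<or> m' = Suc (2 * s)" using par by blast
    then show False
    proof
      assume ms: "m' = 2 * s"
      then have "s \<le> t - 1" "x \<in> set (pl s)" using m' q c by auto
      then show False using xn unfolding pold_def by blast
    next
      assume ms: "m' = Suc (2 * s)"
      then have st: "Suc s \<le> t" using m' q by simp
      then have "Suc s mod L = Suc s" using tL by simp
      then have xs: "x \<in> set (pl (Suc s))" using c ms q by simp
      show False
      proof (cases "Suc s = t")
        case True
        have "s < L" using st tL by simp
        then have "nl s \<noteq> nl (Suc s mod L)" by (rule nbn)
        then have "nl s \<noteq> nl t" using True \<open>Suc s mod L = Suc s\<close> by simp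
        moreover have "nl s = nl t" using c ms q by simp
        ultimately show False by simp
      next
        case False
        then have "Suc s \<le> t - 1" using st by simp
        then show False using xn xs unfolding pold_def by blast
      qed
    qed
  qed
  then show ?thesis using mk_t4[OF q(1) nt1] q(2) by simp
qed

lemma edgeL2: assumes tL: "t < L" and nn: "nnew t" and y: "y \<in> set (pl (Suc t mod L))"
  and yn: "y \<notin> set (pl t)" and yo: "pold t y"
  shows "t4e (Suc (2 * t))"
proof -
  obtain q where q: "q < N" "q div d = Suc (2 * t)" "Jq q = y" using ex_q[of "Suc (2 * t)" y] tL y by auto
  have nt1: "\<not> is_t1 L nl pl (S ! q)" using t1_odd[OF q(1) q(2)] yo q(3) by simp
  have "\<forall>m'<q div d. \<not> (nlab m' = nlab (q div d) \<and> Jq q \<in> set (pt m'))"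
  proof (intro allI impI notI)
    fix m' assume m': "m' < q div d" and c: "nlab m' = nlab (q div d) \<and> Jq q \<in> set (pt m')"
    have e: "nl (m' div 2) = nl t" using c q by (simp add: edge_nlab_def)
    have "m' div 2 \<le> t" using m' q by simp
    moreover have "\<not> m' div 2 < t" using nn e unfolding nnew_def by blast
    ultimately have "m' div 2 = t" by simp
    then have "m' = 2 * t" using m' q by simp
    then show False using c q yn by simp
  qed
  then show ?thesis using mk_t4[OF q(1) nt1] q(2) by simp
qed

definition partial :: "nat \<Rightarrow> bool" where
  "partial k \<longleftrightarrow> Suc k < L \<and> (\<exists>j\<in>set (pl (Suc k)). \<not> pold k j) \<and> (\<exists>j\<in>set (pl (Suc k)). pold k j)"

lemma pos_eq: "subedge_positions L nl pl m = {q. q < N \<and> q div d = m}"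
  unfolding subedge_positions_def using S_len fst_S by auto

lemma T4_class: assumes m: "m < 2 * L" and T4: "is_T4 L nl pl m"
  shows "t4e m \<or> (\<exists>k. m = Suc (2 * k) \<and> partial k)"
proof -
  obtain q1 where q1: "q1 < N" "q1 div d = m" "\<not> is_t1 L nl pl (S ! q1)"
    using T4 unfolding is_T4_def is_T1_def pos_eq by blast
  obtain q2 where q2: "q2 < N" "q2 div d = m" "\<not> is_t3 L nl pl q2"
    using T4 unfolding is_T4_def is_T3_def pos_eq by blast
  show ?thesis
  proof (cases "is_t1 L nl pl (S ! q2)")
    case False
    then show ?thesis unfolding t4e_def using q2 by blast
  next
    case t2: True
    show ?thesis
    proof (cases "is_t3 L nl pl q1")
      case False
      then show ?thesis unfolding t4e_def using q1 by blast
    next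
      case True
      obtain k where k: "m = 2 * k \<or> m = Suc (2 * k)" using par by blast
      then show ?thesis
      proof
        assume "m = 2 * k"
        then show ?thesis using t1_even[OF q1(1), of k] t1_even[OF q2(1), of k] q1 q2 t2 by simp
      next
        assume mk: "m = Suc (2 * k)"
        have kL: "k < L" using m mk by simp
        have a: "\<not> pold k (Jq q2)" using t1_odd[OF q2(1), of k] q2 t2 mk by simp
        have b: "pold k (Jq q1)" using t1_odd[OF q1(1), of k] q1 mk by simp
        have j2: "Jq q2 \<in> set (pl (Suc k mod L))" using Jq_in[OF q2(1)] q2 mk by simp
        have j1: "Jq q1 \<in> set (pl (Suc k mod L))" using Jq_in[OF q1(1)] q1 mk by simp
        have "Suc k < L"
        proof (rule ccontr)
          assume "\<not> Suc k < L"
          then have "Suc k = L" using kL by simp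
          then have "Suc k mod L = 0" by simp
          then have "pold k (Jq q2)" using j2 unfolding pold_def by auto
          then show False using a by simp
        qed
        then have "partial k" unfolding partial_def using a b j1 j2 by auto
        then show ?thesis using mk by blast
      qed
    qed
  qed
qed

end

context lab begin

lemma diff_ex: assumes tL: "t < L" shows "\<exists>y\<in>set (pl (Suc t mod L)). y \<notin> set (pl t)"
proof (rule ccontr)
  assume "\<not> ?thesis"
  then have sub: "set (pl (Suc t mod L)) \<subseteq> set (pl t)" by blast
  have t1: "Suc t mod L < L" using Lpos by simp
  have "card (set (pl (Suc t mod L))) = card (set (pl t))"
    using plen[OF tL] pdist[OF tL] plen[OF t1] pdist[OF t1] by (simp add: distinct_card)
  then have "set (pl (Suc t mod L)) = set (pl t)" using sub by (intro card_subset_eq) auto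
  then show False using nbp[OF tL] by simp
qed

definition freshE :: "nat \<Rightarrow> bool" where
  "freshE m \<longleftrightarrow> (if even m then nnew (m div 2)
     else (Suc (m div 2) < L \<and> (\<exists>j\<in>set (pl (Suc (m div 2))). \<not> pold (m div 2) j)))"

lemma freshE_even: "freshE (2 * t) \<longleftrightarrow> nnew t" unfolding freshE_def by simp
lemma freshE_odd: "freshE (Suc (2 * t)) \<longleftrightarrow> (Suc t < L \<and> (\<exists>j\<in>set (pl (Suc t)). \<not> pold t j))"
  unfolding freshE_def by simp

definition gC :: "nat \<Rightarrow> nat" where
  "gC k = (LEAST m. Suc (Suc (2 * k)) \<le> m \<and> m < 2 * L \<and> \<not> freshE m)"

lemma gC_props: assumes kL: "Suc k < L"
  shows "Suc (Suc (2 * k)) \<le> gC k \<and> gC k < 2 * L \<and> \<not> freshE (gC k) \<and>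
         (\<forall>m. Suc (Suc (2 * k)) \<le> m \<longrightarrow> m < gC k \<longrightarrow> freshE m)"
proof -
  let ?P = "\<lambda>m. Suc (Suc (2 * k)) \<le> m \<and> m < 2 * L \<and> \<not> freshE m"
  have ex: "?P (Suc (2 * (L - 1)))" using kL Lpos by (auto simp: freshE_odd)
  have P: "?P (gC k)" unfolding gC_def using ex by (rule LeastI)
  have "\<forall>m. Suc (Suc (2 * k)) \<le> m \<longrightarrow> m < gC k \<longrightarrow> freshE m"
  proof (intro allI impI)
    fix m assume m: "Suc (Suc (2 * k)) \<le> m" "m < gC k"
    have "\<not> ?P m" using m(2) unfolding gC_def by (rule not_less_Least)
    then show "freshE m" using m P by auto
  qed
  then show ?thesis using P by blast
qed

lemma gC_t4: assumes kL: "Suc k < L" and nn: "nnew (Suc k)" shows "t4e (gC k)"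
proof -
  have g1: "Suc (Suc (2 * k)) \<le> gC k" and g2: "gC k < 2 * L" and g3: "\<not> freshE (gC k)"
    and g4: "\<And>m. Suc (Suc (2 * k)) \<le> m \<Longrightarrow> m < gC k \<Longrightarrow> freshE m"
    using gC_props[OF kL] by blast+
  have "freshE (Suc (Suc (2 * k)))" using nn freshE_even[of "Suc k"] by simp
  then have gt: "Suc (Suc (2 * k)) < gC k" using g1 g3 by (cases "gC k = Suc (Suc (2 * k))") auto
  obtain t where t: "gC k = 2 * t \<or> gC k = Suc (2 * t)" using par by blast
  then show ?thesis
  proof
    assume gt2: "gC k = 2 * t"
    then have t1: "1 \<le> t" and tL: "t < L" using gt g2 by auto
    have "freshE (Suc (2 * (t - 1)))" using g4 gt gt2 t1 by simp
    then have "\<exists>j\<in>set (pl t). \<not> pold (t - 1) j" using t1 by (simp add: freshE_odd)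
    then obtain x where x: "x \<in> set (pl t)" "\<not> pold (t - 1) x" by blast
    have "\<not> nnew t" using g3 gt2 freshE_even by simp
    then show ?thesis using edgeL1[OF t1 tL x(1) x(2)] gt2 by simp
  next
    assume gt2: "gC k = Suc (2 * t)"
    then have tL: "t < L" using g2 by simp
    have "freshE (2 * t)" using g4 gt gt2 by simp
    then have nnt: "nnew t" using freshE_even by simp
    have nf: "\<not> (Suc t < L \<and> (\<exists>j\<in>set (pl (Suc t)). \<not> pold t j))" using g3 gt2 freshE_odd by simp
    obtain y where y: "y \<in> set (pl (Suc t mod L))" "y \<notin> set (pl t)" using diff_ex[OF tL] by blast
    have "pold t y"
    proof (cases "Suc t < L")
      case True
      then show ?thesis using nf y by simp
    next
      case False
      then have "Suc t = L" using tL by simp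
      then have "y \<in> set (pl 0)" using y by simp
      then show ?thesis unfolding pold_def by blast
    qed
    then show ?thesis using edgeL2[OF tL nnt y(1) y(2)] gt2 by simp
  qed
qed

definition "PAB = {k. partial k \<and> (\<not> nnew (Suc k) \<or> (nnew k \<and> (\<exists>j\<in>set (pl (Suc k)). pold k j \<and> j \<notin> set (pl k))))}"
definition "PC = {k. partial k \<and> nnew (Suc k) \<and> \<not> nnew k}"
definition "PG = {k. 1 \<le> k \<and> Suc k < L \<and> nnew (Suc k) \<and> (\<exists>j. j \<in> set (pl k) \<and> j \<in> set (pl (Suc k)))}"

lemma part_sub: "{k. partial k} \<subseteq> PAB \<union> PC \<union> {0} \<union> PG"
proof
  fix k assume "k \<in> {k. partial k}"
  then have p: "partial k" by simp
  then obtain j where j: "j \<in> set (pl (Suc k))" "pold k j" unfolding partial_def by blast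
  show "k \<in> PAB \<union> PC \<union> {0} \<union> PG"
  proof (cases "\<not> nnew (Suc k) \<or> k = 0 \<or> \<not> nnew k")
    case True
    then show ?thesis using p unfolding PAB_def PC_def by auto
  next
    case False
    then have a: "nnew (Suc k)" "k \<noteq> 0" "nnew k" by auto
    show ?thesis
    proof (cases "j \<in> set (pl k)")
      case True
      then have "k \<in> PG" unfolding PG_def using a j p unfolding partial_def by auto
      then show ?thesis by simp
    next
      case False
      then have "k \<in> PAB" unfolding PAB_def using a j p by auto
      then show ?thesis by simp
    qed
  qed
qed

lemma PAB_card: "card PAB \<le> card T4E"
proof -
  define h where "h k = (if nnew (Suc k) then Suc (2 * k) else Suc (Suc (2 * k)))" for k
  have inj: "inj_on h PAB" unfolding h_def by (rule inj_onI) (auto split: if_splits)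
  have "h ` PAB \<subseteq> T4E"
  proof
    fix m assume "m \<in> h ` PAB"
    then obtain k where k: "k \<in> PAB" "m = h k" by auto
    then have p: "partial k" unfolding PAB_def by simp
    then have kL: "Suc k < L" unfolding partial_def by simp
    show "m \<in> T4E"
    proof (cases "nnew (Suc k)")
      case False
      obtain x where x: "x \<in> set (pl (Suc k))" "\<not> pold k x" using p unfolding partial_def by blast
      have "t4e (2 * Suc k)" using edgeL1[of "Suc k" x] kL x False by simp
      then show ?thesis using k False kL unfolding h_def T4E_def by simp
    next
      case True
      then have a: "nnew k" "\<exists>j\<in>set (pl (Suc k)). pold k j \<and> j \<notin> set (pl k)" using k unfolding PAB_def by auto
      then obtain y where y: "y \<in> set (pl (Suc k))" "pold k y" "y \<notin> set (pl k)" by blast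
      have "Suc k mod L = Suc k" using kL by simp
      then have "t4e (Suc (2 * k))" using edgeL2[of k y] kL a(1) y by simp
      then show ?thesis using k True kL unfolding h_def T4E_def by simp
    qed
  qed
  then show ?thesis using card_inj_on_le[OF inj] by (simp add: T4E_def)
qed

lemma PC_card: "card PC \<le> card T4E"
proof -
  have inj: "inj_on gC PC"
  proof (rule inj_onI)
    have key: "\<And>a b. a \<in> PC \<Longrightarrow> b \<in> PC \<Longrightarrow> gC a = gC b \<Longrightarrow> a < b \<Longrightarrow> False"
    proof -
      fix a b assume a: "a \<in> PC" and b: "b \<in> PC" and e: "gC a = gC b" and ab: "a < b"
      have aL: "Suc a < L" and bL: "Suc b < L" using a b unfolding PC_def partial_def by auto
      have nb: "\<not> nnew b" using b unfolding PC_def by simp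
      have "Suc (Suc (2 * b)) \<le> gC b" using gC_props[OF bL] by blast
      then have "2 * b < gC a" using e by simp
      moreover have "Suc (Suc (2 * a)) \<le> 2 * b" using ab by simp
      ultimately have "freshE (2 * b)" using gC_props[OF aL] by blast
      then show False using nb freshE_even by simp
    qed
    fix a b assume "a \<in> PC" "b \<in> PC" "gC a = gC b"
    then show "a = b" using key[of a b] key[of b a] by (cases a b rule: linorder_cases) auto
  qed
  have "gC ` PC \<subseteq> T4E"
  proof
    fix m assume "m \<in> gC ` PC"
    then obtain k where k: "k \<in> PC" "m = gC k" by auto
    then have kL: "Suc k < L" and nn: "nnew (Suc k)" unfolding PC_def partial_def by auto
    have "gC k < 2 * L" using gC_props[OF kL] by blast
    then show "m \<in> T4E" using gC_t4[OF kL nn] k unfolding T4E_def by simp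
  qed
  then show ?thesis using card_inj_on_le[OF inj] by (simp add: T4E_def)
qed

lemma PG_card: "card PG \<le> card W"
proof -
  have "PG \<subseteq> snd ` W"
  proof
    fix k assume "k \<in> PG"
    then have k1: "1 \<le> k" and kL: "Suc k < L" and nn: "nnew (Suc k)"
      and ex: "\<exists>j. j \<in> set (pl k) \<and> j \<in> set (pl (Suc k))" unfolding PG_def by auto
    then obtain j where j: "j \<in> set (pl k)" "j \<in> set (pl (Suc k))" by blast
    obtain k' where k': "k' < L" "k' \<noteq> k" "k' \<noteq> Suc k" "j \<in> set (pl k')" using pm3[OF k1 kL nn j] by blast
    have "{k, Suc k, k'} \<subseteq> {k. k < L \<and> j \<in> set (pl k)}" using k' j kL by auto
    then have "card {k, Suc k, k'} \<le> pm j" unfolding pm_def by (intro card_mono) auto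
    then have "3 \<le> pm j" using k' by simp
    then have "(j, k) \<in> W" unfolding W_def using j kL by simp
    then show "k \<in> snd ` W" by force
  qed
  moreover have "finite W"
  proof -
    have "W \<subseteq> Uset \<times> {..<L}" unfolding W_def Uset_def by auto
    then show ?thesis by (rule finite_subset) (simp add: Uset_fin)
  qed
  ultimately have "card PG \<le> card (snd ` W)" by (intro card_mono) auto
  also have "\<dots> \<le> card W" using \<open>finite W\<close> by (rule card_image_le)
  finally show ?thesis .
qed

lemma partial_card: "card {k. partial k} \<le> 2 * card T4E + 1 + card W"
proof -
  have fin: "finite PAB" "finite PC" "finite PG"
    unfolding PAB_def PC_def PG_def partial_def by (auto intro: finite_subset[of _ "{..<L}"])
  have "card {k. partial k} \<le> card (PAB \<union> PC \<union> {0} \<union> PG)"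
    using part_sub fin by (intro card_mono) auto
  also have "\<dots> \<le> card PAB + card PC + card {0::nat} + card PG"
    by (meson card_Un_le add_le_mono le_refl order_trans)
  finally show ?thesis using PAB_card PC_card PG_card by simp
qed

lemma num_T4_bound: "num_T4 L nl pl \<le> 3 * card T4s + 1 + card W"
proof -
  have "{m. m < 2 * L \<and> is_T4 L nl pl m} \<subseteq> T4E \<union> (\<lambda>k. Suc (2 * k)) ` {k. partial k}"
    using T4_class unfolding T4E_def by blast
  moreover have "finite {k. partial k}" unfolding partial_def by (auto intro: finite_subset[of _ "{..<L}"])
  moreover have "finite T4E" unfolding T4E_def by simp
  ultimately have "num_T4 L nl pl \<le> card (T4E \<union> (\<lambda>k. Suc (2 * k)) ` {k. partial k})"
    unfolding num_T4_def by (intro card_mono) auto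
  also have "\<dots> \<le> card T4E + card ((\<lambda>k. Suc (2 * k)) ` {k. partial k})" by (rule card_Un_le)
  also have "\<dots> \<le> card T4E + card {k. partial k}" using card_image_le \<open>finite {k. partial k}\<close> by simp
  finally show ?thesis using partial_card T4E_card by simp
qed

end


theorem proposition6p3:
  fixes p n d l L :: nat and nl :: "nat \<Rightarrow> nat" and pl :: "nat \<Rightarrow> nat list"
  assumes "1 \<le> d" and "d \<le> l" and "2 \<le> L"
    and "nb_multi_labelling p n d L nl pl"
  shows "real (num_T4 L nl pl) \<le> 12 * Delta_bar d l L nl pl * real l"
proof -
  interpret lab p n d L nl pl using assms by unfold_locales auto
  define r where "r = r_tilde L nl"
  define c where "c = c_tilde L pl"
  have a: "real (num_T4 L nl pl) \<le> 3 * real (card T4s) + 1 + real (card W)"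
  proof -
    have "real (num_T4 L nl pl) \<le> real (3 * card T4s + 1 + card W)"
      using num_T4_bound by (simp only: of_nat_le_iff)
    then show ?thesis by simp
  qed
  have b: "real (card T4s) + 2 * real (card T1s) \<le> 2 * real L * real d"
  proof -
    have "real (card T4s + 2 * card T1s) \<le> real (2 * L * d)"
      using card_T4 by (simp only: of_nat_le_iff)
    then show ?thesis by simp
  qed
  have c1: "real (card T1s) + real d = real d * real r + real c"
  proof -
    have "real (card T1s + d) = real (d * r + c)" using card_T1s unfolding r_def c_def by simp
    then show ?thesis by simp
  qed
  have w: "real (card W) + 6 * real c \<le> 3 * real d * real L"
  proof -
    have "real (card W + 6 * c) \<le> real (3 * d * L)" using W_bound unfolding c_def by (simp only: of_nat_le_iff)
    then show ?thesis by simp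
  qed
  have rb: "2 * real r \<le> real L"
  proof -
    have "real (2 * r) \<le> real L" using r_bound unfolding r_def by (simp only: of_nat_le_iff)
    then show ?thesis by simp
  qed
  have lpos: "real l > 0" using assms by simp
  have dl: "real d \<le> real l" "1 \<le> real d" using assms by auto
  have D: "12 * Delta_bar d l L nl pl * real l
      = 12 * real l + 6 * real L * real l + 6 * real d * real L - 12 * real r * real l - 12 * real c"
    unfolding Delta_bar_def r_def c_def using lpos by (simp add: field_simps)
  have prod: "0 \<le> (6 * real l - 3 * real d) * (real L - 2 * real r)"
    using dl rb by (intro mult_nonneg_nonneg) auto
  have prod2: "(6 * real l - 3 * real d) * (real L - 2 * real r)
     = 6 * real L * real l - 12 * real r * real l - 3 * real d * real L + 6 * real d * real r"
    by (simp add: algebra_simps)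
  show ?thesis unfolding D using a b c1 w prod prod2 dl by (simp add: algebra_simps)
qed


end
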